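(* Let $n\geq4$, $D_n=\{x\in\mathbb{Z}^n:\sum_i x_i\equiv0\bmod2\}$, $\mathcal{P}$ its Voronoi region with vertex set $V_{\mathcal{P}}$, and $D_n^\#$ the dual lattice. Let $\tilde G$ be the Cayley graph on $\frac12D_n^\#$ with generating set $\frac12V_{\mathcal{P}}$. Then every clique $C$ of $\tilde G$ satisfies $\delta^0(C)=\frac{|C|}{|N[C]|}\leq\frac{1}{(3/4)2^n+n-1}$.
   Context: The Voronoi region of a lattice $\Lambda\subset\mathbb{R}^n$ is $\{z:\langle z-x,z-x\rangle\geq\langle z,z\rangle\ \forall x\in\Lambda\}$; $D_n^\#=\{y:\langle x,y\rangle\in\mathbb{Z}\ \forall x\in D_n\}$. It is known that $V_{\mathcal{P}}$ consists of the $2n$ vectors $\pm e_i$ and the $2^n$ vectors $(\pm\frac12,\dots,\pm\frac12)$. In the Cayley graph, $x,y$ are adjacent iff $x-y\in\frac12V_{\mathcal{P}}$. A clique is a set of vertices any two distinct elements of which are adjacent; $N[C]=C+(\{0\}\cup\frac12V_{\mathcal{P}})$ is its closed neighborhood. *)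

theory Defs
  imports "HOL-Analysis.Analysis"
begin

definition Dn :: "(real^'n) set" where
  "Dn = {x. (\<forall>i. x $ i \<in> \<int>) \<and> (\<exists>k::int. (\<Sum>i\<in>UNIV. x $ i) = 2 * of_int k)}"

definition dual_lattice :: "(real^'n) set \<Rightarrow> (real^'n) set" where
  "dual_lattice L = {y. \<forall>x\<in>L. inner x y \<in> \<int>}"

definition voronoi :: "(real^'n) set \<Rightarrow> (real^'n) set" where
  "voronoi L = {z. \<forall>x\<in>L. inner (z - x) (z - x) \<ge> inner z z}"

text \<open>Vertex set V_P of the Voronoi region of D_n, as given in the context:
  the 2n vectors +-e_i and the 2^n vectors (+-1/2,...,+-1/2).\<close>
definition VP :: "(real^'n) set" where
  "VP = {v. \<exists>i. v = axis i 1 \<or> v = axis i (-1)}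
        \<union> {v. \<forall>i. v $ i = 1/2 \<or> v $ i = -1/2}"

definition Gverts :: "(real^'n) set" where
  "Gverts = (\<lambda>y. (1/2::real) *\<^sub>R y) ` dual_lattice Dn"

definition Ggens :: "(real^'n) set" where
  "Ggens = (\<lambda>v. (1/2::real) *\<^sub>R v) ` VP"

definition Gadj :: "real^'n \<Rightarrow> real^'n \<Rightarrow> bool" where
  "Gadj x y \<longleftrightarrow> x \<in> Gverts \<and> y \<in> Gverts \<and> x - y \<in> Ggens"

definition is_clique :: "(real^'n) set \<Rightarrow> bool" where
  "is_clique C \<longleftrightarrow> C \<subseteq> Gverts \<and> (\<forall>x\<in>C. \<forall>y\<in>C. x \<noteq> y \<longrightarrow> Gadj x y)"

definition closed_nbhd :: "(real^'n) set \<Rightarrow> (real^'n) set" where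
  "closed_nbhd C = {c + g | c g. c \<in> C \<and> g \<in> insert 0 Ggens}"

end

theory Submission imports Defs begin

lemma axis_comp: "(axis k x :: 'a::zero^'n) $ i = (if i = k then x else 0)"
  unfolding axis_def by simp

definition Hs :: "(real^'n) set" where
  "Hs = {h. \<forall>i. h $ i = 1/4 \<or> h $ i = -1/4}"

definition Axs :: "(real^'n) set" where
  "Axs = {v. \<exists>i. v = axis i (1/2) \<or> v = axis i (-1/2)}"

definition hint :: "real \<Rightarrow> bool" where "hint r \<longleftrightarrow> (\<exists>k::int. r = of_int k / 2)"
definition qodd :: "real \<Rightarrow> bool" where "qodd r \<longleftrightarrow> (\<exists>k::int. r = (2 * of_int k + 1) / 4)"

definition VI :: "(real^'n) set" where "VI = {v. \<forall>i. hint (v $ i)}"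
definition VQ :: "(real^'n) set" where "VQ = {v. \<forall>i. qodd (v $ i)}"

lemma hint_add: "hint r \<Longrightarrow> hint s \<Longrightarrow> hint (r + s)"
  unfolding hint_def by (metis add_divide_distrib of_int_add)
lemma hint_neg: "hint r \<Longrightarrow> hint (- r)"
  unfolding hint_def by (metis minus_divide_left of_int_minus)
lemma qodd_neg: "qodd r \<Longrightarrow> qodd (- r)"
proof -
  assume "qodd r" then obtain k::int where "r = (2 * of_int k + 1) / 4" unfolding qodd_def by blast
  then have "- r = (2 * of_int (-k-1) + 1) / 4" by (simp add: field_simps)
  then show ?thesis unfolding qodd_def by blast
qed
lemma qodd_hint_add: "qodd r \<Longrightarrow> hint s \<Longrightarrow> qodd (r + s)"
proof -
  assume "qodd r" "hint s"
  then obtain k m::int where "r = (2 * of_int k + 1) / 4" "s = of_int m / 2" unfolding qodd_def hint_def by blast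
  then have "r + s = (2 * of_int (k+m) + 1) / 4" by (simp add: field_simps)
  then show ?thesis unfolding qodd_def by blast
qed
lemma qodd_add: "qodd r \<Longrightarrow> qodd s \<Longrightarrow> hint (r + s)"
proof -
  assume "qodd r" "qodd s"
  then obtain k m::int where "r = (2 * of_int k + 1) / 4" "s = (2 * of_int m + 1) / 4" unfolding qodd_def by blast
  then have "r + s = of_int (k+m+1) / 2" by (simp add: field_simps)
  then show ?thesis unfolding hint_def by blast
qed
lemma hint_qodd: "hint r \<Longrightarrow> qodd r \<Longrightarrow> False"
proof -
  assume "hint r" "qodd r"
  then obtain k m::int where "r = (2 * of_int k + 1) / 4" "r = of_int m / 2" unfolding qodd_def hint_def by blast
  then have "real_of_int (2 * k + 1) = real_of_int (2 * m)" by (simp add: field_simps)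
  then have "2 * k + 1 = 2 * m" by (simp only: of_int_eq_iff)
  then show False by presburger
qed

lemma VI_add: "u \<in> VI \<Longrightarrow> v \<in> VI \<Longrightarrow> u + v \<in> VI"
  unfolding VI_def by (simp add: hint_add)
lemma VI_diff: "u \<in> VI \<Longrightarrow> v \<in> VI \<Longrightarrow> u - v \<in> VI"
proof -
  assume "u \<in> VI" "v \<in> VI"
  then have "-v \<in> VI" unfolding VI_def by (simp add: hint_neg)
  with \<open>u \<in> VI\<close> have "u + (-v) \<in> VI" by (rule VI_add)
  then show ?thesis by simp
qed
lemma VQ_add: "u \<in> VQ \<Longrightarrow> v \<in> VQ \<Longrightarrow> u + v \<in> VI"
  unfolding VI_def VQ_def by (simp add: qodd_add)
lemma VQ_diff: "u \<in> VQ \<Longrightarrow> v \<in> VQ \<Longrightarrow> u - v \<in> VI"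
proof -
  assume "u \<in> VQ" "v \<in> VQ"
  then have "-v \<in> VQ" unfolding VQ_def by (simp add: qodd_neg)
  with \<open>u \<in> VQ\<close> have "u + (-v) \<in> VI" by (rule VQ_add)
  then show ?thesis by simp
qed
lemma VQI_add: "u \<in> VQ \<Longrightarrow> v \<in> VI \<Longrightarrow> u + v \<in> VQ"
  unfolding VI_def VQ_def by (simp add: qodd_hint_add)
lemma VIQ_add: "u \<in> VI \<Longrightarrow> v \<in> VQ \<Longrightarrow> u + v \<in> VQ"
  using VQI_add[of v u] by (simp add: add.commute)
lemma VIQ_diff: "u \<in> VI \<Longrightarrow> v \<in> VQ \<Longrightarrow> u - v \<in> VQ"
proof -
  assume "u \<in> VI" "v \<in> VQ"
  then have "-v \<in> VQ" unfolding VQ_def by (simp add: qodd_neg)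
  with \<open>u \<in> VI\<close> have "u + (-v) \<in> VQ" by (rule VIQ_add)
  then show ?thesis by simp
qed
lemma VQI_diff: "u \<in> VQ \<Longrightarrow> v \<in> VI \<Longrightarrow> u - v \<in> VQ"
proof -
  assume "u \<in> VQ" "v \<in> VI"
  then have "-v \<in> VI" unfolding VI_def by (simp add: hint_neg)
  with \<open>u \<in> VQ\<close> have "u + (-v) \<in> VQ" by (rule VQI_add)
  then show ?thesis by simp
qed
lemma VI_VQ: "u \<in> VI \<Longrightarrow> u \<in> VQ \<Longrightarrow> False"
  unfolding VI_def VQ_def using hint_qodd by blast
lemma zero_VI: "0 \<in> VI"
proof -
  have "hint 0" unfolding hint_def by (rule exI[of _ 0]) simp
  then show ?thesis by (simp add: VI_def)
qed
lemma qodd_q1: "qodd (1/4)" unfolding qodd_def by (rule exI[of _ 0]) simp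
lemma qodd_q2: "qodd (-1/4)" unfolding qodd_def by (rule exI[of _ "-1"]) simp
lemma Hs_VQ: "h \<in> Hs \<Longrightarrow> h \<in> VQ"
proof -
  assume h: "h \<in> Hs"
  have "qodd (h $ i)" for i
  proof -
    have "h $ i = 1/4 \<or> h $ i = -1/4" using h unfolding Hs_def by blast
    then show "qodd (h $ i)"
    proof
      assume a: "h $ i = 1/4" show "qodd (h $ i)" unfolding a by (rule qodd_q1)
    next
      assume a: "h $ i = -1/4" show "qodd (h $ i)" unfolding a by (rule qodd_q2)
    qed
  qed
  then show ?thesis unfolding VQ_def by blast
qed
lemma Axs_VI: "v \<in> Axs \<Longrightarrow> v \<in> VI"
proof -
  have h01: "hint 0" unfolding hint_def by (rule exI[of _ 0]) simp
  have h02: "hint (1/2)" unfolding hint_def by (rule exI[of _ 1]) simp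
  have h03: "hint (-1/2)" unfolding hint_def by (rule exI[of _ "-1"]) simp
  note h0 = h01 h02 h03
  assume "v \<in> Axs"
  then obtain i where "v = axis i (1/2) \<or> v = axis i (-1/2)" unfolding Axs_def by blast
  then have "v $ j = 0 \<or> v $ j = 1/2 \<or> v $ j = -1/2" for j by (auto simp: axis_comp split: if_splits)
  then have "hint (v $ j)" for j using h0 by metis
  then show ?thesis unfolding VI_def by blast
qed

lemma card_vecset:
  assumes "\<And>i. finite (B i)"
  shows "card {v::'a^'n. \<forall>i. v $ i \<in> B i} = (\<Prod>i\<in>UNIV. card (B i))"
proof -
  have inj: "inj_on vec_nth {v::'a^'n. \<forall>i. v $ i \<in> B i}"
    by (rule inj_onI) (simp add: vec_nth_inject)
  have im: "vec_nth ` {v::'a^'n. \<forall>i. v $ i \<in> B i} = Pi\<^sub>E UNIV B"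
  proof
    show "vec_nth ` {v::'a^'n. \<forall>i. v $ i \<in> B i} \<subseteq> Pi\<^sub>E UNIV B" by auto
    show "Pi\<^sub>E UNIV B \<subseteq> vec_nth ` {v::'a^'n. \<forall>i. v $ i \<in> B i}"
    proof
      fix f assume f: "f \<in> Pi\<^sub>E (UNIV::'n set) B"
      have "vec_nth (vec_lambda f :: 'a^'n) = f" by (simp add: vec_lambda_inverse)
      moreover have "vec_lambda f \<in> {v::'a^'n. \<forall>i. v $ i \<in> B i}" using f by auto
      ultimately show "f \<in> vec_nth ` {v::'a^'n. \<forall>i. v $ i \<in> B i}" by (metis image_eqI)
    qed
  qed
  have "card {v::'a^'n. \<forall>i. v $ i \<in> B i} = card (Pi\<^sub>E (UNIV::'n set) B)"
    using card_image[OF inj] im by simp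
  also have "\<dots> = (\<Prod>i\<in>UNIV. card (B i))" by (simp add: card_PiE)
  finally show ?thesis .
qed

lemma Hs_iff: "h \<in> Hs \<longleftrightarrow> (\<forall>i. h $ i = 1/4 \<or> h $ i = -1/4)"
  by (simp add: Hs_def)

lemma Axs_iff: "v \<in> Axs \<longleftrightarrow> (\<exists>i a. (a = 1/2 \<or> a = -1/2) \<and> v = axis i a)"
  unfolding Axs_def by blast

lemma card_Hs: "card (Hs :: (real^'n) set) = 2 ^ CARD('n)"
proof -
  have eq: "(Hs :: (real^'n) set) = {v. \<forall>i. v $ i \<in> {1/4, -1/4}}" by (auto simp: Hs_def)
  have "card (Hs :: (real^'n) set) = card {v::real^'n. \<forall>i. v $ i \<in> {1/4, -1/4}}" by (simp only: eq)
  also have "\<dots> = (\<Prod>i\<in>(UNIV::'n set). card {1/4, -1/4::real})" by (rule card_vecset) simp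
  also have "\<dots> = 2 ^ CARD('n)" by (simp add: numeral_2_eq_2)
  finally show ?thesis .
qed

lemma finite_Hs: "finite (Hs :: (real^'n) set)"
  using card_Hs[where 'n='n] by (metis card.infinite power_not_zero zero_neq_numeral)

lemma card_Hs_fix:
  assumes t: "t = 1/4 \<or> t = -1/4"
  shows "card {h \<in> (Hs :: (real^'n) set). h $ l = t} = 2 ^ (CARD('n) - 1)"
proof -
  define B where "B = (\<lambda>i. if i = l then {t} else {1/4, -1/4::real})"
  have "{h \<in> (Hs :: (real^'n) set). h $ l = t} = {v. \<forall>i. v $ i \<in> B i}"
    using t by (auto simp: Hs_def B_def)
  then have "card {h \<in> (Hs :: (real^'n) set). h $ l = t} = (\<Prod>i\<in>(UNIV::'n set). card (B i))"
    by (simp add: card_vecset B_def)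
  also have "\<dots> = card (B l) * (\<Prod>i\<in>(UNIV::'n set) - {l}. card (B i))"
    by (simp add: prod.remove)
  also have "\<dots> = (\<Prod>i\<in>(UNIV::'n set) - {l}. 2)"
  proof -
    have "card (B l) = 1" by (simp add: B_def)
    moreover have "(\<Prod>i\<in>(UNIV::'n set) - {l}. card (B i)) = (\<Prod>i\<in>(UNIV::'n set) - {l}. 2)"
      by (rule prod.cong) (auto simp: B_def)
    ultimately show ?thesis by simp
  qed
  also have "\<dots> = 2 ^ (CARD('n) - 1)" by (simp add: card_Diff_singleton)
  finally show ?thesis .
qed

lemma finite_Axs: "finite (Axs :: (real^'n) set)"
proof -
  have "(Axs :: (real^'n) set) = (\<lambda>(i,a). axis i a) ` (UNIV \<times> {1/2, -1/2})"
    unfolding Axs_def by auto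
  moreover have "finite (UNIV \<times> {1/2, -1/2::real} :: ('n \<times> real) set)" by simp
  ultimately show ?thesis by (metis finite_imageI)
qed

lemma scaleR_axis': "(c::real) *\<^sub>R (axis i a :: real^'n) = axis i (c * a)"
  by (simp add: vec_eq_iff axis_comp)

lemma Ggens_eq: "(Ggens :: (real^'n) set) = Axs \<union> Hs"
proof -
  have "(Ggens :: (real^'n) set) = (\<lambda>v. (1/2::real) *\<^sub>R v) ` VP" by (simp add: Ggens_def)
  also have "\<dots> = Axs \<union> Hs"
  proof
    show "(\<lambda>v. (1/2::real) *\<^sub>R v) ` (VP :: (real^'n) set) \<subseteq> Axs \<union> Hs"
    proof
      fix w :: "real^'n" assume "w \<in> (\<lambda>v. (1/2::real) *\<^sub>R v) ` VP"
      then obtain v where v: "v \<in> VP" "w = (1/2::real) *\<^sub>R v" by blast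
      show "w \<in> Axs \<union> Hs"
      proof (cases "\<exists>i. v = axis i 1 \<or> v = axis i (-1)")
        case True
        then obtain i where "v = axis i 1 \<or> v = axis i (-1)" by blast
        then have "w = axis i (1/2) \<or> w = axis i (-1/2)"
        proof
          assume "v = axis i 1" then have "w = axis i (1/2)" using v(2) by (simp add: scaleR_axis')
          then show ?thesis ..
        next
          assume "v = axis i (-1)" then have "w = axis i (-1/2)" using v(2) by (simp add: scaleR_axis')
          then show ?thesis ..
        qed
        then show ?thesis unfolding Axs_def by blast
      next
        case False
        then have "\<forall>i. v $ i = 1/2 \<or> v $ i = -1/2" using v(1) unfolding VP_def by blast
        then have vv: "\<And>i. v $ i = 1/2 \<or> v $ i = -1/2" by blast
        have "\<forall>i. w $ i = 1/4 \<or> w $ i = -1/4"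
        proof
          fix i
          have wi: "w $ i = v $ i / 2" using v(2) by simp
          show "w $ i = 1/4 \<or> w $ i = -1/4" using vv[of i] wi by auto
        qed
        then have "w \<in> Hs" by (simp add: Hs_def)
        then show ?thesis by blast
      qed
    qed
    show "Axs \<union> Hs \<subseteq> (\<lambda>v. (1/2::real) *\<^sub>R v) ` (VP :: (real^'n) set)"
    proof
      fix w :: "real^'n" assume w: "w \<in> Axs \<union> Hs"
      have "2 *\<^sub>R w \<in> VP"
      proof (cases "w \<in> Axs")
        case True
        then obtain i where "w = axis i (1/2) \<or> w = axis i (-1/2)" unfolding Axs_def by blast
        then have "2 *\<^sub>R w = axis i 1 \<or> 2 *\<^sub>R w = axis i (-1)"
        proof
          assume "w = axis i (1/2)" then have "2 *\<^sub>R w = axis i 1" by (simp add: scaleR_axis')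
          then show ?thesis ..
        next
          assume "w = axis i (-1/2)" then have "2 *\<^sub>R w = axis i (-1)" by (simp add: scaleR_axis')
          then show ?thesis ..
        qed
        then show ?thesis unfolding VP_def by blast
      next
        case False
        then have "w \<in> Hs" using w by blast
        have "\<forall>i. (2 *\<^sub>R w) $ i = 1/2 \<or> (2 *\<^sub>R w) $ i = -1/2"
        proof
          fix i
          have "w $ i = 1/4 \<or> w $ i = -1/4" using \<open>w \<in> Hs\<close> Hs_iff by blast
          then show "(2 *\<^sub>R w) $ i = 1/2 \<or> (2 *\<^sub>R w) $ i = -1/2" by auto
        qed
        then show ?thesis unfolding VP_def by blast
      qed
      moreover have "w = (1/2::real) *\<^sub>R (2 *\<^sub>R w)" by simp
      ultimately show "w \<in> (\<lambda>v. (1/2::real) *\<^sub>R v) ` VP" by blast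
    qed
  qed
  finally show ?thesis .
qed

lemma Hs_neg: "h \<in> Hs \<Longrightarrow> - h \<in> Hs"
  by (auto simp: Hs_def)

lemma no3:
  assumes "x - y \<in> Axs" "y - z \<in> Axs" "x - z \<in> Axs"
  shows False
proof -
  obtain i a where a: "a = 1/2 \<or> a = -1/2" "x - y = axis i a" using assms(1) Axs_iff by blast
  obtain j b where b: "b = 1/2 \<or> b = -1/2" "y - z = axis j b" using assms(2) Axs_iff by blast
  obtain k c where c: "c = 1/2 \<or> c = -1/2" "x - z = axis k c" using assms(3) Axs_iff by blast
  have "x - z = (x - y) + (y - z)" by simp
  then have e: "axis k c = axis i a + axis j b" using a b c by simp
  have e1: "\<And>m. (axis k c) $ m = (axis i a) $ m + (axis j b) $ m" using e by simp
  have "(if i = k then c else 0) = a + (if i = j then b else 0)" using e1[of i] by (simp add: axis_comp)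
  moreover have "(if j = k then c else 0) = (if j = i then a else 0) + b" using e1[of j] by (simp add: axis_comp)
  moreover have "c = (if k = i then a else 0) + (if k = j then b else 0)" using e1[of k] by (simp add: axis_comp)
  ultimately show False using a(1) b(1) c(1) by (auto split: if_splits)
qed

lemma card_le2:
  assumes fin: "finite S" and P: "\<forall>x\<in>S. \<forall>y\<in>S. x \<noteq> y \<longrightarrow> x - y \<in> Axs"
  shows "card S \<le> 2"
proof (rule ccontr)
  assume "\<not> card S \<le> 2"
  then have "3 \<le> card S" by simp
  then obtain T where "T \<subseteq> S" "card T = 3" by (meson obtain_subset_with_card_n)
  then obtain x y z where "T = {x,y,z}" "x \<noteq> y" "y \<noteq> z" "x \<noteq> z" by (auto simp: card_3_iff)
  then have "x \<in> S" "y \<in> S" "z \<in> S" using \<open>T \<subseteq> S\<close> by auto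
  then show False using no3[of x y z] P \<open>x \<noteq> y\<close> \<open>y \<noteq> z\<close> \<open>x \<noteq> z\<close> by blast
qed

definition hsum :: "(real^'n) set \<Rightarrow> (real^'n) set" where
  "hsum S = (\<Union>b\<in>S. (\<lambda>h. b + h) ` Hs)"

definition asum :: "(real^'n) set \<Rightarrow> (real^'n) set" where
  "asum S = (\<Union>b\<in>S. (\<lambda>h. b + h) ` Axs)"

lemma Hs_comp: "h \<in> Hs \<Longrightarrow> h $ i = 1/4 \<or> h $ i = -1/4"
  using Hs_iff by blast

lemma finite_hsum: "finite S \<Longrightarrow> finite (hsum S)"
  unfolding hsum_def by (simp add: finite_Hs)

lemma card_transl: "card ((\<lambda>h. b + h) ` (A :: (real^'n) set)) = card A"
  by (rule card_image) (simp add: inj_on_def)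

lemma hsum_card1: "card (hsum {d :: real^'n}) = 2 ^ CARD('n)"
  unfolding hsum_def by (simp add: card_transl card_Hs)

lemma hsum_card2:
  assumes "d2 - d \<in> Axs"
  shows "2 ^ CARD('n) + 2 ^ (CARD('n) - 1) \<le> card (hsum {d, d2 :: real^'n})"
proof -
  obtain l a where a: "a = 1/2 \<or> a = -1/2" "d2 - d = axis l a" using assms Axs_iff by blast
  define T where "T = {h \<in> (Hs :: (real^'n) set). h $ l = a/2}"
  define S1 where "S1 = (\<lambda>h. d + h) ` (Hs :: (real^'n) set)"
  define S2 where "S2 = (\<lambda>h. d2 + h) ` T"
  have c1: "card S1 = 2 ^ CARD('n)" unfolding S1_def card_transl card_Hs ..
  have "a/2 = 1/4 \<or> a/2 = -1/4" using a(1) by auto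
  then have c2: "card S2 = 2 ^ (CARD('n) - 1)" unfolding S2_def T_def card_transl by (rule card_Hs_fix)
  have f1: "finite S1" unfolding S1_def by (simp add: finite_Hs)
  have f2: "finite S2" unfolding S2_def T_def by (simp add: finite_Hs)
  have dl: "d2 $ l = d $ l + a"
  proof -
    have "(d2 - d) $ l = a" using a(2) by simp
    then show ?thesis by simp
  qed
  have disj: "S1 \<inter> S2 = {}"
  proof (rule ccontr)
    assume "S1 \<inter> S2 \<noteq> {}"
    then obtain p where "p \<in> S1" "p \<in> S2" by blast
    then obtain h h' where h: "h \<in> Hs" "h' \<in> T" "d + h = d2 + h'" unfolding S1_def S2_def by auto
    have "h = d2 + h' - d" using h(3) by (metis add_diff_cancel_left')
    then have "h $ l = d2 $ l + h' $ l - d $ l" by simp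
    then have "h $ l = a + a/2" using dl h(2) unfolding T_def by simp
    then show False using Hs_comp[OF h(1), of l] a(1) by auto
  qed
  have e: "card (S1 \<union> S2) = 2 ^ CARD('n) + 2 ^ (CARD('n) - 1)"
    using card_Un_disjoint[OF f1 f2 disj] c1 c2 by simp
  have sub: "S1 \<union> S2 \<subseteq> hsum {d, d2}" unfolding hsum_def S1_def S2_def T_def by auto
  have fin: "finite (hsum {d, d2})" by (rule finite_hsum) simp
  show ?thesis using card_mono[OF fin sub] e by simp
qed

lemma E_exists:
  fixes CA CB :: "(real^'n) set"
  assumes A2: "CA = {c, c'}" "c' - c \<in> Axs"
    and BB: "\<forall>x\<in>CB. \<forall>y\<in>CB. x \<noteq> y \<longrightarrow> x - y \<in> Axs"
    and AB: "\<forall>a\<in>CA. \<forall>b\<in>CB. a - b \<in> Hs"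
  shows "\<exists>E. E \<subseteq> asum CA \<and> E \<inter> hsum CB = {} \<and> finite E \<and> 2 * (CARD('n) - 1) \<le> card E"
proof -
  obtain i \<alpha> where \<alpha>: "\<alpha> = 1/2 \<or> \<alpha> = -1/2" "c' - c = axis i \<alpha>" using A2(2) Axs_iff by blast
  have cc: "c' = c + axis i \<alpha>" using \<alpha>(2) by (metis add.commute diff_add_cancel)
  have ex_d: "\<exists>d. c - d \<in> Hs \<and> c' - d \<in> Hs \<and> (CB \<noteq> {} \<longrightarrow> d \<in> CB)"
  proof (cases "CB = {}")
    case False
    then obtain d where "d \<in> CB" by blast
    then show ?thesis using AB A2(1) by blast
  next
    case True
    define \<sigma> :: "real^'n" where "\<sigma> = (\<chi> j. if j = i then -\<alpha>/2 else 1/4)"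
    have s1: "\<sigma> \<in> Hs" unfolding Hs_iff \<sigma>_def using \<alpha>(1) by auto
    have "c' - (c - \<sigma>) = axis i \<alpha> + \<sigma>" using cc by (simp add: algebra_simps)
    moreover have "axis i \<alpha> + \<sigma> \<in> Hs" unfolding Hs_iff \<sigma>_def using \<alpha>(1) by (auto simp: axis_comp)
    ultimately have "c' - (c - \<sigma>) \<in> Hs" by metis
    moreover have "c - (c - \<sigma>) \<in> Hs" using s1 by simp
    ultimately show ?thesis using True by blast
  qed
  then obtain d where d: "c - d \<in> Hs" "c' - d \<in> Hs" "CB \<noteq> {} \<longrightarrow> d \<in> CB" by blast
  define J where "J = {j. \<forall>d'\<in>CB. d' $ j = d $ j}"
  have cardJ: "CARD('n) - 1 \<le> card J"
  proof (cases "\<forall>d'\<in>CB. d' = d")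
    case True
    then have "J = UNIV" unfolding J_def by auto
    then show ?thesis by simp
  next
    case False
    then obtain d2 where d2: "d2 \<in> CB" "d2 \<noteq> d" by blast
    then have dB: "d \<in> CB" using d(3) by blast
    then have "d2 - d \<in> Axs" using BB d2 by blast
    then obtain l \<beta> where \<beta>: "\<beta> = 1/2 \<or> \<beta> = -1/2" "d2 - d = axis l \<beta>" using Axs_iff by blast
    have "UNIV - {l} \<subseteq> J"
    proof
      fix j assume j: "j \<in> UNIV - {l}"
      have "d' $ j = d $ j" if "d' \<in> CB" for d'
      proof -
        have "d' = d \<or> d' = d2"
        proof (rule ccontr)
          assume "\<not> (d' = d \<or> d' = d2)"
          then have "d' - d2 \<in> Axs" "d2 - d \<in> Axs" "d' - d \<in> Axs" using BB that d2 dB by auto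
          then show False using no3 by blast
        qed
        moreover have "d2 $ j = d $ j"
        proof -
          have "(d2 - d) $ j = 0" using \<beta>(2) j by (simp add: axis_comp)
          then show ?thesis by simp
        qed
        ultimately show ?thesis by auto
      qed
      then show "j \<in> J" unfolding J_def by blast
    qed
    then have "card (UNIV - {l}) \<le> card J" using card_mono[of J "UNIV - {l}"] by simp
    then show ?thesis by (simp add: card_Diff_singleton)
  qed
  define h where "h = c - d"
  define h' where "h' = c' - d"
  have hH: "h \<in> Hs" "h' \<in> Hs" using d unfolding h_def h'_def by auto
  have hh': "h' = axis i \<alpha> + h" unfolding h_def h'_def using cc by (simp add: algebra_simps)
  have h'i0: "h' $ i = \<alpha> + h $ i" using hh' by simp
  have hi: "h $ i = -\<alpha>/2" and h'i: "h' $ i = \<alpha>/2"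
    using h'i0 Hs_comp[OF hH(1), of i] Hs_comp[OF hH(2), of i] \<alpha>(1) by auto
  have ne0: "h $ j \<noteq> 0" "h' $ j \<noteq> 0" for j
    using Hs_comp[OF hH(1), of j] Hs_comp[OF hH(2), of j] by auto
  define f where "f = (\<lambda>j. c + axis j (2 * h $ j))"
  define f' where "f' = (\<lambda>j. c' + axis j (2 * h' $ j))"
  define E where "E = f ` J \<union> f' ` J"
  have inj1: "inj_on f J"
  proof (rule inj_onI)
    fix j k assume "f j = f k"
    then have "axis j (2 * h $ j) = axis k (2 * h $ k)" unfolding f_def by simp
    then show "j = k" using ne0 by (simp add: axis_eq_axis)
  qed
  have inj2: "inj_on f' J"
  proof (rule inj_onI)
    fix j k assume "f' j = f' k"
    then have "axis j (2 * h' $ j) = axis k (2 * h' $ k)" unfolding f'_def by simp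
    then show "j = k" using ne0 by (simp add: axis_eq_axis)
  qed
  have disj: "f ` J \<inter> f' ` J = {}"
  proof (rule ccontr)
    assume "f ` J \<inter> f' ` J \<noteq> {}"
    then obtain j k where "f j = f' k" by blast
    then have "c + axis j (2 * h $ j) = c + (axis i \<alpha> + axis k (2 * h' $ k))"
      unfolding f_def f'_def cc by (simp add: algebra_simps)
    then have "axis j (2 * h $ j) = axis i \<alpha> + axis k (2 * h' $ k)" by simp
    then have "(axis j (2 * h $ j)) $ i = (axis i \<alpha> + axis k (2 * h' $ k)) $ i" by simp
    then have "(if i = j then 2 * h $ j else 0) = \<alpha> + (if i = k then 2 * h' $ k else 0)"
      by (simp add: axis_comp)
    then show False using hi h'i \<alpha>(1) by (auto split: if_splits)
  qed
  have finJ: "finite J" by simp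
  have cardE: "card E = card J + card J"
    unfolding E_def using card_Un_disjoint[OF finite_imageI[OF finJ] finite_imageI[OF finJ] disj]
      card_image[OF inj1] card_image[OF inj2] by simp
  have ax1: "axis j (2 * h $ j) \<in> Axs" for j
  proof -
    have "2 * h $ j = 1/2 \<or> 2 * h $ j = -1/2" using Hs_comp[OF hH(1), of j] by auto
    then show ?thesis unfolding Axs_iff by blast
  qed
  have ax2: "axis j (2 * h' $ j) \<in> Axs" for j
  proof -
    have "2 * h' $ j = 1/2 \<or> 2 * h' $ j = -1/2" using Hs_comp[OF hH(2), of j] by auto
    then show ?thesis unfolding Axs_iff by blast
  qed
  have sub: "E \<subseteq> asum CA"
    unfolding E_def asum_def f_def f'_def A2(1) using ax1 ax2 by blast
  have avoid: "E \<inter> hsum CB = {}"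
  proof (rule ccontr)
    assume "E \<inter> hsum CB \<noteq> {}"
    then obtain p where p: "p \<in> E" "p \<in> hsum CB" by blast
    then obtain d' g where dg: "d' \<in> CB" "g \<in> Hs" "p = d' + g" unfolding hsum_def by blast
    have gp: "g = p - d'" using dg(3) by simp
    from p(1) obtain j where j: "j \<in> J" "p = f j \<or> p = f' j" unfolding E_def by blast
    have dj: "d' $ j = d $ j" using j(1) dg(1) unfolding J_def by blast
    show False
    proof (cases "p = f j")
      case True
      have "g $ j = c $ j + 2 * h $ j - d' $ j" using gp True unfolding f_def by simp
      then have "g $ j = 3 * h $ j" using dj unfolding h_def by simp
      then show False using Hs_comp[OF dg(2), of j] Hs_comp[OF hH(1), of j] by auto
    next
      case False
      then have pf: "p = f' j" using j(2) by blast
      have "g $ j = c' $ j + 2 * h' $ j - d' $ j" using gp pf unfolding f'_def by simp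
      then have "g $ j = 3 * h' $ j" using dj unfolding h'_def by simp
      then show False using Hs_comp[OF dg(2), of j] Hs_comp[OF hH(2), of j] by auto
    qed
  qed
  have "finite E" unfolding E_def using finJ by simp
  moreover have "2 * (CARD('n) - 1) \<le> card E" using cardE cardJ by simp
  ultimately show ?thesis using sub avoid by blast
qed

lemma final_arith:
  fixes a b n :: nat
  assumes "a \<le> 2" "b \<le> 2" "2 \<le> n"
  shows "(a + b) * (3 * 2 ^ (n - 2) + n - 1) \<le>
     (if b = 0 then 0 else if b = 1 then 2 ^ n else 2 ^ n + 2 ^ (n - 1)) + (if a = 2 then 2 * (n - 1) else 0)
   + ((if a = 0 then 0 else if a = 1 then 2 ^ n else 2 ^ n + 2 ^ (n - 1)) + (if b = 2 then 2 * (n - 1) else 0))"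
proof -
  obtain k where k: "n = k + 2" using assms(3) by (metis add.commute le_Suc_ex)
  define Q :: nat where "Q = 2 ^ k"
  have kQ: "k + 1 \<le> Q" unfolding Q_def using less_exp[of k] by (simp add: Suc_le_eq)
  have e1: "2 ^ n = 4 * Q" unfolding Q_def k by (simp add: power_add)
  have e2: "2 ^ (n - 1) = 2 * Q" unfolding Q_def k by simp
  have e3: "2 ^ (n - 2) = Q" unfolding Q_def k by simp
  have ab: "a = 0 \<or> a = 1 \<or> a = 2" "b = 0 \<or> b = 1 \<or> b = 2" using assms(1,2) by auto
  show ?thesis unfolding e1 e2 e3 using ab kQ k by (elim disjE) (simp_all add: algebra_simps)
qed

lemma closed_nbhd_mem: "c \<in> C \<Longrightarrow> g \<in> insert 0 Ggens \<Longrightarrow> c + g \<in> closed_nbhd C"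
  unfolding closed_nbhd_def by blast

theorem lemma16:
  fixes C :: "(real^'n) set"
  assumes "CARD('n) \<ge> 4"
    and "is_clique C"
  shows "real (card C) / real (card (closed_nbhd C))
           \<le> 1 / ((3/4) * 2 ^ CARD('n) + real CARD('n) - 1)"
proof -
  define M :: nat where "M = 3 * 2 ^ (CARD('n) - 2) + CARD('n) - 1"
  have n4: "4 \<le> CARD('n)" using assms(1) .
  define k where "k = CARD('n) - 2"
  have kk: "CARD('n) = k + 2" unfolding k_def using n4 by simp
  have p2: "(2::real) ^ CARD('n) = 4 * 2 ^ k" by (simp only: kk power_add) simp
  have Mk: "M = 3 * 2 ^ k + k + 1" unfolding M_def kk by simp
  have Mreal: "(3/4) * 2 ^ CARD('n) + real CARD('n) - 1 = real M"
    unfolding p2 Mk kk by simp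
  have Mpos: "0 < M" unfolding M_def using n4 by simp
  show ?thesis
  proof (cases "C = {}")
    case True
    then show ?thesis unfolding Mreal using Mpos by simp
  next
    case False
    then obtain c0 where c0: "c0 \<in> C" by blast
    have adj: "\<forall>x\<in>C. \<forall>y\<in>C. x \<noteq> y \<longrightarrow> x - y \<in> Axs \<union> Hs"
      using assms(2) unfolding is_clique_def Gadj_def Ggens_eq by blast
    define CA where "CA = {c \<in> C. c - c0 \<in> VI}"
    define CB where "CB = {c \<in> C. c - c0 \<in> VQ}"
    have cover: "C = CA \<union> CB"
    proof
      show "C \<subseteq> CA \<union> CB"
      proof
        fix c assume c: "c \<in> C"
        show "c \<in> CA \<union> CB"
        proof (cases "c = c0")
          case True then show ?thesis using c unfolding CA_def by (simp add: zero_VI)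
        next
          case False
          then have "c - c0 \<in> Axs \<union> Hs" using adj c c0 by blast
          then show ?thesis using c Axs_VI Hs_VQ unfolding CA_def CB_def by blast
        qed
      qed
      show "CA \<union> CB \<subseteq> C" unfolding CA_def CB_def by blast
    qed
    have ABdisj: "CA \<inter> CB = {}" unfolding CA_def CB_def using VI_VQ by blast
    have finC: "finite C"
    proof -
      have "C \<subseteq> (\<lambda>g. c0 + g) ` insert 0 (Axs \<union> Hs)"
      proof
        fix c assume c: "c \<in> C"
        have "c - c0 \<in> insert 0 (Axs \<union> Hs)" using adj c c0 by (cases "c = c0") auto
        moreover have "c = c0 + (c - c0)" by simp
        ultimately show "c \<in> (\<lambda>g. c0 + g) ` insert 0 (Axs \<union> Hs)" by blast
      qed
      moreover have "finite ((\<lambda>g. c0 + g) ` insert 0 (Axs \<union> (Hs :: (real^'n) set)))"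
        by (simp add: finite_Axs finite_Hs)
      ultimately show ?thesis by (rule finite_subset)
    qed
    have finA: "finite CA" and finB: "finite CB" using finC cover by (metis finite_Un)+
    have AA: "\<forall>x\<in>CA. \<forall>y\<in>CA. x \<noteq> y \<longrightarrow> x - y \<in> Axs"
    proof (intro ballI impI)
      fix x y assume xy: "x \<in> CA" "y \<in> CA" "x \<noteq> y"
      have v: "x - y \<in> VI" using VI_diff[of "x - c0" "y - c0"] xy unfolding CA_def by simp
      have "x - y \<in> Axs \<union> Hs" using adj xy unfolding CA_def by blast
      then show "x - y \<in> Axs" using v Hs_VQ VI_VQ by blast
    qed
    have BB: "\<forall>x\<in>CB. \<forall>y\<in>CB. x \<noteq> y \<longrightarrow> x - y \<in> Axs"
    proof (intro ballI impI)
      fix x y assume xy: "x \<in> CB" "y \<in> CB" "x \<noteq> y"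
      have v: "x - y \<in> VI" using VQ_diff[of "x - c0" "y - c0"] xy unfolding CB_def by simp
      have "x - y \<in> Axs \<union> Hs" using adj xy unfolding CB_def by blast
      then show "x - y \<in> Axs" using v Hs_VQ VI_VQ by blast
    qed
    have AB: "\<forall>a\<in>CA. \<forall>b\<in>CB. a - b \<in> Hs"
    proof (intro ballI)
      fix a b assume ab: "a \<in> CA" "b \<in> CB"
      have v: "a - b \<in> VQ" using VIQ_diff[of "a - c0" "b - c0"] ab unfolding CA_def CB_def by simp
      have "a \<noteq> b" using ab ABdisj by blast
      then have "a - b \<in> Axs \<union> Hs" using adj ab unfolding CA_def CB_def by blast
      then show "a - b \<in> Hs" using v Axs_VI VI_VQ by blast
    qed
    have BA: "\<forall>b\<in>CB. \<forall>a\<in>CA. b - a \<in> Hs"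
    proof (intro ballI)
      fix a b assume ab: "b \<in> CB" "a \<in> CA"
      then have "- (a - b) \<in> Hs" using AB Hs_neg by blast
      then show "b - a \<in> Hs" by simp
    qed
    have cA2: "card CA \<le> 2" using card_le2[OF finA AA] .
    have cB2: "card CB \<le> 2" using card_le2[OF finB BB] .
    define G :: "nat \<Rightarrow> nat" where
      "G = (\<lambda>x. if x = 0 then 0 else if x = 1 then 2 ^ CARD('n) else 2 ^ CARD('n) + 2 ^ (CARD('n) - 1))"
    have Gb: "G (card S) \<le> card (hsum S)"
      if S: "finite S" "card S \<le> 2" "\<forall>x\<in>S. \<forall>y\<in>S. x \<noteq> y \<longrightarrow> x - y \<in> Axs" for S :: "(real^'n) set"
    proof -
      have "card S = 0 \<or> card S = 1 \<or> card S = 2" using S(2) by auto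
      then show ?thesis
      proof (elim disjE)
        assume "card S = 0" then show ?thesis unfolding G_def by simp
      next
        assume c1: "card S = 1"
        then obtain d where "S = {d}" by (rule card_1_singletonE)
        then have "card (hsum S) = 2 ^ CARD('n)" using hsum_card1[of d] by simp
        then show ?thesis unfolding G_def using c1 by simp
      next
        assume c2: "card S = 2"
        then obtain d d2 where dd: "S = {d, d2}" "d \<noteq> d2" by (meson card_2_iff)
        have "d2 \<in> S" "d \<in> S" using dd(1) by auto
        then have "d2 - d \<in> Axs" using S(3) dd(2) by metis
        then have "2 ^ CARD('n) + 2 ^ (CARD('n) - 1) \<le> card (hsum S)" using hsum_card2[of d2 d] dd(1) by simp
        then show ?thesis unfolding G_def using c2 by simp
      qed
    qed
    have Eex: "\<exists>E. E \<subseteq> asum S \<and> E \<inter> hsum T = {} \<and> finite E \<and> (card S = 2 \<longrightarrow> 2 * (CARD('n) - 1) \<le> card E)"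
      if ST: "\<forall>x\<in>S. \<forall>y\<in>S. x \<noteq> y \<longrightarrow> x - y \<in> Axs" "\<forall>x\<in>T. \<forall>y\<in>T. x \<noteq> y \<longrightarrow> x - y \<in> Axs"
        "\<forall>a\<in>S. \<forall>b\<in>T. a - b \<in> Hs" for S T :: "(real^'n) set"
    proof (cases "card S = 2")
      case True
      then obtain c c' where cc: "S = {c, c'}" "c \<noteq> c'" by (meson card_2_iff)
      have "c \<in> S" "c' \<in> S" using cc(1) by auto
      then have ax: "c' - c \<in> Axs" using ST(1) cc(2) by metis
      have "\<exists>E. E \<subseteq> asum S \<and> E \<inter> hsum T = {} \<and> finite E \<and> 2 * (CARD('n) - 1) \<le> card E"
        by (rule E_exists[OF cc(1) ax ST(2) ST(3)])
      then show ?thesis by blast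
    next
      case False
      then show ?thesis by (intro exI[of _ "{}"]) simp
    qed
    obtain EA where EA: "EA \<subseteq> asum CA" "EA \<inter> hsum CB = {}" "finite EA"
      "card CA = 2 \<longrightarrow> 2 * (CARD('n) - 1) \<le> card EA"
      using Eex[OF AA BB AB] by blast
    obtain EB where EB: "EB \<subseteq> asum CB" "EB \<inter> hsum CA = {}" "finite EB"
      "card CB = 2 \<longrightarrow> 2 * (CARD('n) - 1) \<le> card EB"
      using Eex[OF BB AA BA] by blast
    define P where "P = hsum CB \<union> EA"
    define Q where "Q = hsum CA \<union> EB"
    have hsA: "hsum CA \<subseteq> {p. p - c0 \<in> VQ}"
    proof
      fix p assume "p \<in> hsum CA"
      then obtain a h where ah: "a \<in> CA" "h \<in> Hs" "p = a + h" unfolding hsum_def by blast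
      have e: "p - c0 = (a - c0) + h" using ah(3) by simp
      have "a - c0 \<in> VI" using ah(1) unfolding CA_def by blast
      then have "(a - c0) + h \<in> VQ" using VIQ_add[of "a - c0" h] Hs_VQ[OF ah(2)] by blast
      then show "p \<in> {p. p - c0 \<in> VQ}" unfolding mem_Collect_eq e .
    qed
    have hsB: "hsum CB \<subseteq> {p. p - c0 \<in> VI}"
    proof
      fix p assume "p \<in> hsum CB"
      then obtain a h where ah: "a \<in> CB" "h \<in> Hs" "p = a + h" unfolding hsum_def by blast
      have e: "p - c0 = (a - c0) + h" using ah(3) by simp
      have "a - c0 \<in> VQ" using ah(1) unfolding CB_def by blast
      then have "(a - c0) + h \<in> VI" using VQ_add[of "a - c0" h] Hs_VQ[OF ah(2)] by blast
      then show "p \<in> {p. p - c0 \<in> VI}" unfolding mem_Collect_eq e .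
    qed
    have asA: "asum CA \<subseteq> {p. p - c0 \<in> VI}"
    proof
      fix p assume "p \<in> asum CA"
      then obtain a h where ah: "a \<in> CA" "h \<in> Axs" "p = a + h" unfolding asum_def by blast
      have e: "p - c0 = (a - c0) + h" using ah(3) by simp
      have "a - c0 \<in> VI" using ah(1) unfolding CA_def by blast
      then have "(a - c0) + h \<in> VI" using VI_add[of "a - c0" h] Axs_VI[OF ah(2)] by blast
      then show "p \<in> {p. p - c0 \<in> VI}" unfolding mem_Collect_eq e .
    qed
    have asB: "asum CB \<subseteq> {p. p - c0 \<in> VQ}"
    proof
      fix p assume "p \<in> asum CB"
      then obtain a h where ah: "a \<in> CB" "h \<in> Axs" "p = a + h" unfolding asum_def by blast
      have e: "p - c0 = (a - c0) + h" using ah(3) by simp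
      have "a - c0 \<in> VQ" using ah(1) unfolding CB_def by blast
      then have "(a - c0) + h \<in> VQ" using VQI_add[of "a - c0" h] Axs_VI[OF ah(2)] by blast
      then show "p \<in> {p. p - c0 \<in> VQ}" unfolding mem_Collect_eq e .
    qed
    have P1: "P \<subseteq> {p. p - c0 \<in> VI}" unfolding P_def using hsB asA EA(1) by blast
    have Q1: "Q \<subseteq> {p. p - c0 \<in> VQ}" unfolding Q_def using hsA asB EB(1) by blast
    have PQ: "P \<inter> Q = {}"
    proof (rule ccontr)
      assume "P \<inter> Q \<noteq> {}"
      then obtain p where "p \<in> P" "p \<in> Q" by blast
      then have "p - c0 \<in> VI" "p - c0 \<in> VQ" using P1 Q1 by blast+
      then show False by (rule VI_VQ)
    qed
    have hsN: "hsum S \<subseteq> closed_nbhd C" if S: "S \<subseteq> C" for S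
    proof
      fix p assume "p \<in> hsum S"
      then obtain b h where bh: "b \<in> S" "h \<in> Hs" "p = b + h" unfolding hsum_def by blast
      have "h \<in> insert 0 Ggens" using bh(2) Ggens_eq by blast
      then show "p \<in> closed_nbhd C" using closed_nbhd_mem[of b C h] bh S by blast
    qed
    have asN: "asum S \<subseteq> closed_nbhd C" if S: "S \<subseteq> C" for S
    proof
      fix p assume "p \<in> asum S"
      then obtain b h where bh: "b \<in> S" "h \<in> Axs" "p = b + h" unfolding asum_def by blast
      have "h \<in> insert 0 Ggens" using bh(2) Ggens_eq by blast
      then show "p \<in> closed_nbhd C" using closed_nbhd_mem[of b C h] bh S by blast
    qed
    have CAs: "CA \<subseteq> C" and CBs: "CB \<subseteq> C" using cover by blast+
    have PN: "P \<union> Q \<subseteq> closed_nbhd C"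
      unfolding P_def Q_def using hsN[OF CAs] hsN[OF CBs] asN[OF CAs] asN[OF CBs] EA(1) EB(1) by blast
    have finN: "finite (closed_nbhd C)"
    proof -
      have "closed_nbhd C \<subseteq> (\<lambda>(c, g). c + g) ` (C \<times> insert 0 Ggens)"
        unfolding closed_nbhd_def by auto
      moreover have "finite (C \<times> insert 0 (Ggens :: (real^'n) set))"
        using finC by (simp add: Ggens_eq finite_Axs finite_Hs)
      ultimately show ?thesis using finite_subset by blast
    qed
    have fhA: "finite (hsum CA)" using finite_hsum[OF finA] .
    have fhB: "finite (hsum CB)" using finite_hsum[OF finB] .
    have cP: "card P = card (hsum CB) + card EA"
      unfolding P_def using card_Un_disjoint[OF fhB EA(3) ] EA(2) by (simp add: Int_commute)
    have cQ: "card Q = card (hsum CA) + card EB"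
      unfolding Q_def using card_Un_disjoint[OF fhA EB(3) ] EB(2) by (simp add: Int_commute)
    have fP: "finite P" unfolding P_def using fhB EA(3) by simp
    have fQ: "finite Q" unfolding Q_def using fhA EB(3) by simp
    have cPQ: "card P + card Q \<le> card (closed_nbhd C)"
      using card_Un_disjoint[OF fP fQ PQ] card_mono[OF finN PN] by simp
    have gA: "G (card CA) \<le> card (hsum CA)" using Gb[OF finA cA2 AA] .
    have gB: "G (card CB) \<le> card (hsum CB)" using Gb[OF finB cB2 BB] .
    have eA: "(if card CA = 2 then 2 * (CARD('n) - 1) else 0) \<le> card EA" using EA(4) by simp
    have eB: "(if card CB = 2 then 2 * (CARD('n) - 1) else 0) \<le> card EB" using EB(4) by simp
    have cardC: "card C = card CA + card CB"
      using cover ABdisj card_Un_disjoint[OF finA finB] by simp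
    have ar: "(card CA + card CB) * M \<le>
        G (card CB) + (if card CA = 2 then 2 * (CARD('n) - 1) else 0)
      + (G (card CA) + (if card CB = 2 then 2 * (CARD('n) - 1) else 0))"
      unfolding M_def G_def using final_arith[OF cA2 cB2] n4 by simp
    have main: "card C * M \<le> card (closed_nbhd C)"
    proof -
      have "card C * M = (card CA + card CB) * M" using cardC by simp
      also have "\<dots> \<le> G (card CB) + card EA + (G (card CA) + card EB)"
        using ar eA eB by linarith
      also have "\<dots> \<le> card P + card Q" using gA gB cP cQ by linarith
      also have "\<dots> \<le> card (closed_nbhd C)" by (rule cPQ)
      finally show ?thesis .
    qed
    have Cpos: "0 < card C" using finC False by (simp add: card_gt_0_iff)
    have "0 < card C * M" using Cpos Mpos by simp
    then have Npos: "0 < card (closed_nbhd C)" using main by (rule less_le_trans)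
    have mainR: "real (card C) * real M \<le> real (card (closed_nbhd C))"
      using main by (simp only: of_nat_mult[symmetric] of_nat_le_iff)
    show ?thesis unfolding Mreal using mainR Npos Mpos by (simp add: field_simps)
  qed
qed

end
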